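(* Let $U$ be a finite set of attributes, $\varphi$ a standard closure operator on $U$, and $X\subseteq U$. Let $\mathrm{WCD}(Y,\Sigma)$ denote the output of the algorithm WildClosureDirect described below on input set $Y\subseteq U$ and implication set $\Sigma$, and let $\Sigma(Z)$ denote the closure of $Z$ with respect to $\Sigma$. (i) If $\Sigma$ is the canonical direct unit basis of $\varphi$, then $\mathrm{WCD}(X,\Sigma)=\Sigma(X)$. (ii) If $\Sigma$ is the D-basis of $\varphi$, then $\mathrm{WCD}(\varphi_0(X),\Sigma)=\Sigma(\varphi_0(X))$.
   Context: An implication over $U$ is a pair $A\to B$ with $A,B\subseteq U$; the closure $\Sigma(Z)$ w.r.t. a set of implications $\Sigma$ is the smallest superset of $Z$ that contains $B$ whenever it contains $A$, for each $A\to B\in\Sigma$. A closure operator $\varphi$ on $U$ is standard if for every $a\in U$ the set $\varphi(a)\setminus\{a\}$ is closed, and $\varphi(a)\neq\varphi(b)$ for $a\neq b$. For $c\in U$, $A\subseteq U$ is a minimal generator of $c$ if $c\in\varphi(A)$, $c\notin A$, and no proper subset $A'\subsetneq A$ has $c\in\varphi(A')$. Canonical direct unit basis: $\{A\to c \mid c\in U,\ A \text{ a minimal generator of } c\}$. D-basis: let $\Sigma_0=\{a\to c\mid a,c\in U,\ c\in\varphi(a)\setminus\{a\}\}$ and $\varphi_0(X)$ the closure of $X$ w.r.t. $\Sigma_0$. A minimal generator $A$ of $c$ with $|A|\ge2$ is a minimal D-generator of $c$ if $c\notin\varphi_0(A)$ and for every minimal generator $A'$ of $c$, $A'\subseteq\varphi_0(A)$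 implies $A'=A$. The D-basis is $\Sigma_0\cup\{A\to c\mid c\in U,\ A\text{ a minimal D-generator of }c\}$. In both bases, implications with equal left-hand side may be merged into a single implication whose right-hand side is the union. Algorithm WildClosureDirect on input $(Y,\Sigma)$: for each $m\in U$ let $list[m]$ be the set of implications $A\to B\in\Sigma$ with $m\in A$. Compute $\Sigma_1:=\bigcup_{m\in U\setminus Y} list[m]$ (this set is fixed once computed). For each $A\to B\in\Sigma\setminus\Sigma_1$, set $Y:=Y\cup B$. Return $Y$. *)

theory Defs
  imports Main
begin

type_synonym 'a impl = "'a set \<times> 'a set"
type_synonym 'a unit_impl = "'a set \<times> 'a"

definition imp_closure :: "'a impl set \<Rightarrow> 'a set \<Rightarrow> 'a set" where
  "imp_closure Ss Z = \<Inter>{W. Z \<subseteq> W \<and> (\<forall>(A, B) \<in> Ss. A \<subseteq> W \<longrightarrow> B \<subseteq> W)}"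

definition to_impls :: "'a unit_impl set \<Rightarrow> 'a impl set" where
  "to_impls S = {(A, {c}) | A c. (A, c) \<in> S}"

definition closure_op :: "'a set \<Rightarrow> ('a set \<Rightarrow> 'a set) \<Rightarrow> bool" where
  "closure_op U phi \<longleftrightarrow>
     (\<forall>X. X \<subseteq> U \<longrightarrow> X \<subseteq> phi X \<and> phi X \<subseteq> U) \<and>
     (\<forall>X Y. X \<subseteq> Y \<and> Y \<subseteq> U \<longrightarrow> phi X \<subseteq> phi Y) \<and>
     (\<forall>X. X \<subseteq> U \<longrightarrow> phi (phi X) = phi X)"

definition standard_op :: "'a set \<Rightarrow> ('a set \<Rightarrow> 'a set) \<Rightarrow> bool" where
  "standard_op U phi \<longleftrightarrow>
     (\<forall>a \<in> U. phi (phi {a} - {a}) = phi {a} - {a}) \<and>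
     (\<forall>a \<in> U. \<forall>b \<in> U. a \<noteq> b \<longrightarrow> phi {a} \<noteq> phi {b})"

definition min_gen :: "'a set \<Rightarrow> ('a set \<Rightarrow> 'a set) \<Rightarrow> 'a \<Rightarrow> 'a set \<Rightarrow> bool" where
  "min_gen U phi c A \<longleftrightarrow> A \<subseteq> U \<and> c \<in> phi A \<and> c \<notin> A \<and> (\<forall>A'. A' \<subset> A \<longrightarrow> c \<notin> phi A')"

definition canonical_direct_unit_basis :: "'a set \<Rightarrow> ('a set \<Rightarrow> 'a set) \<Rightarrow> 'a unit_impl set" where
  "canonical_direct_unit_basis U phi = {(A, c) | A c. c \<in> U \<and> min_gen U phi c A}"

definition sigma0 :: "'a set \<Rightarrow> ('a set \<Rightarrow> 'a set) \<Rightarrow> 'a unit_impl set" where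
  "sigma0 U phi = {({a}, c) | a c. a \<in> U \<and> c \<in> U \<and> c \<in> phi {a} - {a}}"

definition phi0 :: "'a set \<Rightarrow> ('a set \<Rightarrow> 'a set) \<Rightarrow> 'a set \<Rightarrow> 'a set" where
  "phi0 U phi X = imp_closure (to_impls (sigma0 U phi)) X"

definition min_D_gen :: "'a set \<Rightarrow> ('a set \<Rightarrow> 'a set) \<Rightarrow> 'a \<Rightarrow> 'a set \<Rightarrow> bool" where
  "min_D_gen U phi c A \<longleftrightarrow> min_gen U phi c A \<and> card A \<ge> 2 \<and> c \<notin> phi0 U phi A \<and>
     (\<forall>A'. min_gen U phi c A' \<and> A' \<subseteq> phi0 U phi A \<longrightarrow> A' = A)"

definition D_basis :: "'a set \<Rightarrow> ('a set \<Rightarrow> 'a set) \<Rightarrow> 'a unit_impl set" where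
  "D_basis U phi = sigma0 U phi \<union> {(A, c) | A c. c \<in> U \<and> min_D_gen U phi c A}"

text \<open>Ss is obtained from the unit basis S by merging implications with equal left-hand
  side (any partition of the right-hand sides sharing a left-hand side; no merging = singletons).\<close>
definition merged_form :: "'a unit_impl set \<Rightarrow> 'a impl set \<Rightarrow> bool" where
  "merged_form S Ss \<longleftrightarrow>
     (\<forall>(A, C) \<in> Ss. C \<noteq> {} \<and> (\<forall>c \<in> C. (A, c) \<in> S)) \<and>
     (\<forall>(A, c) \<in> S. \<exists>C. (A, C) \<in> Ss \<and> c \<in> C) \<and>
     (\<forall>(A, C) \<in> Ss. \<forall>(A', C') \<in> Ss. A = A' \<longrightarrow> C = C' \<or> C \<inter> C' = {})"

text \<open>Algorithm WildClosureDirect. Since Ss1 is fixed once computed, the loop adds the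
  right-hand sides of all implications of Ss \ Ss1 to Y.\<close>
definition impl_list :: "'a impl set \<Rightarrow> 'a \<Rightarrow> 'a impl set" where
  "impl_list Ss m = {(A, B) \<in> Ss. m \<in> A}"

definition WCD :: "'a set \<Rightarrow> 'a set \<Rightarrow> 'a impl set \<Rightarrow> 'a set" where
  "WCD U Y Ss =
     (let Ss1 = (\<Union>m \<in> U - Y. impl_list Ss m)
      in Y \<union> \<Union>{B. \<exists>A. (A, B) \<in> Ss - Ss1})"

end

theory Submission
  imports Defs
begin

lemma ic_incl: "Z \<subseteq> imp_closure Ss Z"
  unfolding imp_closure_def by blast

lemma ic_closed:
  assumes "(A,B) \<in> Ss" "A \<subseteq> imp_closure Ss Z"
  shows "B \<subseteq> imp_closure Ss Z"
  unfolding imp_closure_def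
proof (rule Inter_greatest)
  fix W assume W: "W \<in> {W. Z \<subseteq> W \<and> (\<forall>(A, B) \<in> Ss. A \<subseteq> W \<longrightarrow> B \<subseteq> W)}"
  then have "imp_closure Ss Z \<subseteq> W" unfolding imp_closure_def by (rule Inter_lower)
  then have "A \<subseteq> W" using assms(2) by blast
  then show "B \<subseteq> W" using W assms(1) by blast
qed

lemma ic_least: "Z \<subseteq> W \<Longrightarrow> (\<forall>(A,B)\<in>Ss. A \<subseteq> W \<longrightarrow> B \<subseteq> W) \<Longrightarrow> imp_closure Ss Z \<subseteq> W"
  unfolding imp_closure_def by blast

lemma cl_props:
  assumes "closure_op U phi"
  shows "X \<subseteq> U \<Longrightarrow> X \<subseteq> phi X" "X \<subseteq> U \<Longrightarrow> phi X \<subseteq> U"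
    "X \<subseteq> Y \<Longrightarrow> Y \<subseteq> U \<Longrightarrow> phi X \<subseteq> phi Y" "X \<subseteq> U \<Longrightarrow> phi (phi X) = phi X"
  using assms unfolding closure_op_def by (meson, meson, meson, meson)

lemma single_mono:
  assumes "closure_op U phi" "a \<in> U" "x \<in> phi {a}"
  shows "phi {x} \<subseteq> phi {a}"
proof -
  have "{a} \<subseteq> U" using assms(2) by simp
  then have h: "phi {a} \<subseteq> U" by (rule cl_props(2)[OF assms(1)])
  have "{x} \<subseteq> phi {a}" using assms(3) by simp
  then have "phi {x} \<subseteq> phi (phi {a})" using h by (rule cl_props(3)[OF assms(1)])
  also have "phi (phi {a}) = phi {a}" using \<open>{a} \<subseteq> U\<close> by (rule cl_props(4)[OF assms(1)])
  finally show ?thesis .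
qed

lemma self_in: "closure_op U phi \<Longrightarrow> a \<in> U \<Longrightarrow> a \<in> phi {a}"
  using cl_props(1)[of U phi "{a}"] by simp

lemma single_U: "closure_op U phi \<Longrightarrow> a \<in> U \<Longrightarrow> phi {a} \<subseteq> U"
  using cl_props(2)[of U phi "{a}"] by simp

lemma phi0_eq:
  assumes "closure_op U phi" "A \<subseteq> U"
  shows "phi0 U phi A = (\<Union>a\<in>A. phi {a})"
proof
  show "phi0 U phi A \<subseteq> (\<Union>a\<in>A. phi {a})"
    unfolding phi0_def
  proof (rule ic_least)
    show "A \<subseteq> (\<Union>a\<in>A. phi {a})"
    proof
      fix a assume "a \<in> A"
      then have "a \<in> phi {a}" using self_in[OF assms(1)] assms(2) by auto
      then show "a \<in> (\<Union>a\<in>A. phi {a})" using \<open>a \<in> A\<close> by auto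
    qed
    show "\<forall>(B, C)\<in>to_impls (sigma0 U phi). B \<subseteq> (\<Union>a\<in>A. phi {a}) \<longrightarrow> C \<subseteq> (\<Union>a\<in>A. phi {a})"
    proof (clarsimp simp: to_impls_def sigma0_def)
      fix b c a
      assume "b \<in> U" "c \<in> U" "c \<in> phi {b}" "a \<in> A" "b \<in> phi {a}"
      moreover have "a \<in> U" using \<open>a \<in> A\<close> assms(2) by auto
      ultimately have "c \<in> phi {a}" using single_mono[OF assms(1), of a b] by auto
      then show "\<exists>x\<in>A. c \<in> phi {x}" using \<open>a \<in> A\<close> by auto
    qed
  qed
  show "(\<Union>a\<in>A. phi {a}) \<subseteq> phi0 U phi A"
  proof clarify
    fix a x assume a: "a \<in> A" and x: "x \<in> phi {a}"
    have inc: "A \<subseteq> phi0 U phi A" unfolding phi0_def by (rule ic_incl)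
    show "x \<in> phi0 U phi A"
    proof (cases "x = a")
      case True then show ?thesis using a inc by auto
    next
      case False
      have aU: "a \<in> U" using a assms(2) by auto
      have "x \<in> U" using single_U[OF assms(1) aU] x by auto
      then have "({a},{x}) \<in> to_impls (sigma0 U phi)"
        unfolding to_impls_def sigma0_def using False aU x by auto
      moreover have "{a} \<subseteq> phi0 U phi A" using a inc by auto
      ultimately have "{x} \<subseteq> phi0 U phi A" unfolding phi0_def by (rule ic_closed)
      then show ?thesis by simp
    qed
  qed
qed

lemma phi0_sub: "A \<subseteq> phi0 U phi Z \<Longrightarrow> phi0 U phi A \<subseteq> phi0 U phi Z"
  unfolding phi0_def
proof (rule ic_least)
  show "\<forall>(B, C)\<in>to_impls (sigma0 U phi). B \<subseteq> imp_closure (to_impls (sigma0 U phi)) Z \<longrightarrow> C \<subseteq> imp_closure (to_impls (sigma0 U phi)) Z"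
    using ic_closed[of _ _ "to_impls (sigma0 U phi)" Z] by blast
qed (simp add: phi0_def)

lemma phi0_U: "X \<subseteq> U \<Longrightarrow> phi0 U phi X \<subseteq> U"
  unfolding phi0_def by (rule ic_least) (auto simp: to_impls_def sigma0_def)

lemma WCD_eq:
  assumes sound: "\<forall>(A,C)\<in>Ss. A \<subseteq> U"
  shows "WCD U Y Ss = Y \<union> \<Union>{B. \<exists>A. (A,B) \<in> Ss \<and> A \<subseteq> Y}"
proof -
  have "(\<exists>A. (A,B) \<in> Ss - (\<Union>m \<in> U - Y. impl_list Ss m)) \<longleftrightarrow> (\<exists>A. (A,B) \<in> Ss \<and> A \<subseteq> Y)" for B
  proof
    assume "\<exists>A. (A,B) \<in> Ss - (\<Union>m \<in> U - Y. impl_list Ss m)"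
    then obtain A where A: "(A,B) \<in> Ss" "(A,B) \<notin> (\<Union>m \<in> U - Y. impl_list Ss m)" by auto
    have "A \<subseteq> U" using A(1) sound by auto
    moreover have "\<forall>m \<in> U - Y. m \<notin> A" using A unfolding impl_list_def by auto
    ultimately have "A \<subseteq> Y" by auto
    then show "\<exists>A. (A,B) \<in> Ss \<and> A \<subseteq> Y" using A(1) by auto
  next
    assume "\<exists>A. (A,B) \<in> Ss \<and> A \<subseteq> Y"
    then obtain A where A: "(A,B) \<in> Ss" "A \<subseteq> Y" by auto
    then have "(A,B) \<notin> (\<Union>m \<in> U - Y. impl_list Ss m)" unfolding impl_list_def by auto
    then show "\<exists>A. (A,B) \<in> Ss - (\<Union>m \<in> U - Y. impl_list Ss m)" using A by auto
  qed
  then show ?thesis unfolding WCD_def Let_def by simp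
qed

lemma wcd_main:
  assumes cl: "closure_op U phi" and Y: "Y \<subseteq> U"
    and sound: "\<forall>(A,C)\<in>Ss. A \<subseteq> U \<and> C \<subseteq> phi A"
    and big: "phi Y \<subseteq> WCD U Y Ss"
  shows "WCD U Y Ss = imp_closure Ss Y"
proof -
  have sU: "\<forall>(A,C)\<in>Ss. A \<subseteq> U" using sound by auto
  note W = WCD_eq[OF sU, of Y]
  have YY: "Y \<subseteq> phi Y" by (rule cl_props(1)[OF cl Y])
  have BY: "B \<subseteq> phi Y" if "(A,B) \<in> Ss" "A \<subseteq> phi Y" for A B
  proof -
    have AU: "A \<subseteq> U" and BA: "B \<subseteq> phi A" using sound that(1) by auto
    have "phi A \<subseteq> phi (phi Y)" using that(2) cl_props(2)[OF cl Y] by (rule cl_props(3)[OF cl])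
    also have "phi (phi Y) = phi Y" by (rule cl_props(4)[OF cl Y])
    finally show ?thesis using BA by auto
  qed
  have "WCD U Y Ss \<subseteq> phi Y"
    unfolding W using BY YY by auto
  with big have eq: "WCD U Y Ss = phi Y" by auto
  have "imp_closure Ss Y \<subseteq> phi Y"
    by (rule ic_least) (use YY BY in auto)
  moreover have "WCD U Y Ss \<subseteq> imp_closure Ss Y"
  proof -
    have "B \<subseteq> imp_closure Ss Y" if "(A,B) \<in> Ss" "A \<subseteq> Y" for A B
      using that(1) order_trans[OF that(2) ic_incl[of Y Ss]] by (rule ic_closed)
    then show ?thesis unfolding W using ic_incl[of Y Ss] by auto
  qed
  ultimately show ?thesis using eq by auto
qed

lemma wcd_from_basis:
  assumes "merged_form S Ss" "(A,c) \<in> S" "A \<subseteq> Y" "\<forall>(A,C)\<in>Ss. A \<subseteq> U"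
  shows "c \<in> WCD U Y Ss"
proof -
  obtain C where C: "(A,C) \<in> Ss" "c \<in> C" using assms(1,2) unfolding merged_form_def by blast
  then show ?thesis unfolding WCD_def impl_list_def Let_def using assms(3) by blast
qed

lemma exists_min_gen:
  assumes cl: "closure_op U phi" and Y: "Y \<subseteq> U" "finite U" and c: "c \<in> phi Y" "c \<notin> Y"
  shows "\<exists>A. min_gen U phi c A \<and> A \<subseteq> Y"
proof -
  have "Y \<subseteq> Y \<and> c \<in> phi Y" using c by simp
  then obtain A where A: "A \<subseteq> Y \<and> c \<in> phi A" and Am: "\<forall>B. B \<subseteq> Y \<and> c \<in> phi B \<longrightarrow> card A \<le> card B"
    using ex_has_least_nat[of "\<lambda>A. A \<subseteq> Y \<and> c \<in> phi A" Y card] by auto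
  have fY: "finite Y" using Y by (rule finite_subset)
  have "min_gen U phi c A"
    unfolding min_gen_def
  proof (intro conjI allI impI)
    show "A \<subseteq> U" using A Y by auto
    show "c \<in> phi A" using A by auto
    show "c \<notin> A" using A c by auto
    fix A' assume A': "A' \<subset> A"
    have "finite A" using A fY finite_subset by auto
    then have "card A' < card A" using A' by (rule psubset_card_mono)
    moreover have "A' \<subseteq> Y" using A' A by auto
    ultimately show "c \<notin> phi A'" using Am by (meson not_le)
  qed
  then show ?thesis using A by auto
qed

lemma phi_empty:
  assumes cl: "closure_op U phi" and st: "standard_op U phi"
  shows "phi {} = {}"
proof (rule ccontr)
  assume "phi {} \<noteq> {}"
  then obtain a where a: "a \<in> phi {}" by blast
  have aU: "a \<in> U" using a cl_props(2)[OF cl, of "{}"] by blast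
  have "phi {a} - {a} \<subseteq> U" using cl_props(2)[OF cl, of "{a}"] aU by blast
  then have "phi {} \<subseteq> phi (phi {a} - {a})" using cl_props(3)[OF cl, of "{}"] by blast
  also have "\<dots> = phi {a} - {a}" using st aU unfolding standard_op_def by blast
  finally show False using a by blast
qed

lemma min_gen_maxels:
  assumes cl: "closure_op U phi" and st: "standard_op U phi" and mg: "min_gen U phi c A"
  shows "A = {a \<in> phi0 U phi A. \<forall>x\<in>phi0 U phi A. a \<in> phi {x} \<longrightarrow> x = a}"
proof -
  have AU: "A \<subseteq> U" using mg unfolding min_gen_def by auto
  note P0 = phi0_eq[OF cl AU]
  have inj: "x = a" if "x \<in> U" "a \<in> U" "phi {x} = phi {a}" for x a
    using st that unfolding standard_op_def by metis
  have key: "a = a'" if "a \<in> A" "a' \<in> A" "a \<in> phi {a'}" for a a'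
  proof (rule ccontr)
    assume ne: "a \<noteq> a'"
    have sub: "A - {a} \<subseteq> U" using AU by auto
    have "{a'} \<subseteq> A - {a}" using that ne by auto
    then have "phi {a'} \<subseteq> phi (A - {a})" using sub by (rule cl_props(3)[OF cl])
    moreover have "A - {a} \<subseteq> phi (A - {a})" using sub by (rule cl_props(1)[OF cl])
    ultimately have "A \<subseteq> phi (A - {a})" using that by auto
    then have "phi A \<subseteq> phi (phi (A - {a}))" using cl_props(2)[OF cl sub] by (rule cl_props(3)[OF cl])
    also have "phi (phi (A - {a})) = phi (A - {a})" using sub by (rule cl_props(4)[OF cl])
    finally have "c \<in> phi (A - {a})" using mg unfolding min_gen_def by auto
    moreover have "A - {a} \<subset> A" using that by auto
    ultimately show False using mg unfolding min_gen_def by auto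
  qed
  have selfA: "a \<in> phi0 U phi A" if "a \<in> A" for a
  proof -
    have "a \<in> phi {a}" using self_in[OF cl] that AU by auto
    then show ?thesis unfolding P0 using that by auto
  qed
  show ?thesis
  proof
    show "A \<subseteq> {a \<in> phi0 U phi A. \<forall>x\<in>phi0 U phi A. a \<in> phi {x} \<longrightarrow> x = a}"
    proof (intro subsetI CollectI conjI ballI impI)
      fix a assume a: "a \<in> A"
      show "a \<in> phi0 U phi A" using selfA a .
      fix x assume x: "x \<in> phi0 U phi A" "a \<in> phi {x}"
      then obtain a' where a': "a' \<in> A" "x \<in> phi {a'}" unfolding P0 by auto
      have a'U: "a' \<in> U" using a' AU by auto
      have "phi {x} \<subseteq> phi {a'}" using single_mono[OF cl a'U a'(2)] .
      then have "a = a'" using key a a' x by auto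
      have xU: "x \<in> U" using single_U[OF cl a'U] a'(2) by auto
      have aU: "a \<in> U" using a AU by auto
      have "phi {x} \<subseteq> phi {a}" using \<open>phi {x} \<subseteq> phi {a'}\<close> \<open>a = a'\<close> by simp
      moreover have "phi {a} \<subseteq> phi {x}" using single_mono[OF cl xU x(2)] .
      ultimately show "x = a" using inj[OF xU aU] by auto
    qed
    show "{a \<in> phi0 U phi A. \<forall>x\<in>phi0 U phi A. a \<in> phi {x} \<longrightarrow> x = a} \<subseteq> A"
    proof (intro subsetI)
      fix a assume "a \<in> {a \<in> phi0 U phi A. \<forall>x\<in>phi0 U phi A. a \<in> phi {x} \<longrightarrow> x = a}"
      then have a: "a \<in> phi0 U phi A" and m: "\<forall>x\<in>phi0 U phi A. a \<in> phi {x} \<longrightarrow> x = a" by auto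
      obtain a' where a': "a' \<in> A" "a \<in> phi {a'}" using a unfolding P0 by auto
      have "a' = a" using m selfA[OF a'(1)] a'(2) by auto
      then show "a \<in> A" using a'(1) by simp
    qed
  qed
qed

theorem proposition3:
  fixes U :: "'a set" and phi :: "'a set \<Rightarrow> 'a set" and X :: "'a set"
  assumes "finite U" and "closure_op U phi" and "standard_op U phi" and "X \<subseteq> U"
  shows "(\<forall>Ss. merged_form (canonical_direct_unit_basis U phi) Ss \<longrightarrow>
            WCD U X Ss = imp_closure Ss X)
       \<and> (\<forall>Ss. merged_form (D_basis U phi) Ss \<longrightarrow>
            WCD U (phi0 U phi X) Ss = imp_closure Ss (phi0 U phi X))"
proof (intro conjI allI impI)
  note fin = assms(1) and cl = assms(2) and st = assms(3) and XU = assms(4)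
  fix Ss assume mf: "merged_form (canonical_direct_unit_basis U phi) Ss"
  have sound: "\<forall>(A,C)\<in>Ss. A \<subseteq> U \<and> C \<subseteq> phi A"
    using mf unfolding merged_form_def canonical_direct_unit_basis_def min_gen_def by fastforce
  have sU: "\<forall>(A,C)\<in>Ss. A \<subseteq> U" using sound by blast
  have "phi X \<subseteq> WCD U X Ss"
  proof
    fix c assume c: "c \<in> phi X"
    show "c \<in> WCD U X Ss"
    proof (cases "c \<in> X")
      case True then show ?thesis unfolding WCD_def Let_def by blast
    next
      case False
      obtain A where A: "min_gen U phi c A" "A \<subseteq> X" using exists_min_gen[OF cl XU fin c False] by blast
      have "c \<in> U" using c cl_props(2)[OF cl XU] by blast
      then have "(A,c) \<in> canonical_direct_unit_basis U phi"
        unfolding canonical_direct_unit_basis_def using A by blast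
      then show ?thesis using wcd_from_basis[OF mf _ A(2) sU] by blast
    qed
  qed
  then show "WCD U X Ss = imp_closure Ss X" using wcd_main[OF cl XU sound] by blast
next
  note fin = assms(1) and cl = assms(2) and st = assms(3) and XU = assms(4)
  fix Ss assume mf: "merged_form (D_basis U phi) Ss"
  define Y where "Y = phi0 U phi X"
  have YU: "Y \<subseteq> U" unfolding Y_def using phi0_U[OF XU] .
  have Ycl: "x \<in> Y" if "a \<in> Y" "x \<in> phi {a}" for a x
  proof -
    have "phi0 U phi Y \<subseteq> Y" unfolding Y_def by (rule phi0_sub) simp
    then show ?thesis using phi0_eq[OF cl YU] that by blast
  qed
  have sound: "\<forall>(A,C)\<in>Ss. A \<subseteq> U \<and> C \<subseteq> phi A"
    using mf unfolding merged_form_def D_basis_def min_D_gen_def min_gen_def sigma0_def by fastforce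
  have sU: "\<forall>(A,C)\<in>Ss. A \<subseteq> U" using sound by blast
  have "phi Y \<subseteq> WCD U Y Ss"
  proof
    fix c assume c: "c \<in> phi Y"
    show "c \<in> WCD U Y Ss"
    proof (cases "c \<in> Y")
      case True then show ?thesis unfolding WCD_def Let_def by blast
    next
      case False
      have cU: "c \<in> U" using c cl_props(2)[OF cl YU] by blast
      obtain A0 where A0: "min_gen U phi c A0 \<and> A0 \<subseteq> Y" using exists_min_gen[OF cl YU fin c False] by blast
      obtain A where A: "min_gen U phi c A \<and> A \<subseteq> Y"
        and Amin: "\<forall>B. min_gen U phi c B \<and> B \<subseteq> Y \<longrightarrow> card (phi0 U phi A) \<le> card (phi0 U phi B)"
        using ex_has_least_nat[of "\<lambda>A. min_gen U phi c A \<and> A \<subseteq> Y" A0 "\<lambda>A. card (phi0 U phi A)"] A0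
        by blast
      have AU: "A \<subseteq> U" using A YU by blast
      have finA: "finite A" using AU fin finite_subset by blast
      have p0AY: "phi0 U phi A \<subseteq> Y" unfolding Y_def by (rule phi0_sub) (use A Y_def in blast)
      have "A \<noteq> {}"
        using A phi_empty[OF cl st] unfolding min_gen_def by auto
      moreover have "card A \<noteq> 1"
      proof
        assume "card A = 1"
        then obtain a where "A = {a}" by (auto simp: card_1_singleton_iff)
        then show False using A Ycl False unfolding min_gen_def by blast
      qed
      ultimately have c2: "card A \<ge> 2" using finA
        by (metis One_nat_def card_0_eq less_2_cases not_le)
      have "min_D_gen U phi c A"
        unfolding min_D_gen_def
      proof (intro conjI allI impI)
        show "min_gen U phi c A" using A by blast
        show "2 \<le> card A" by (rule c2)
        show "c \<notin> phi0 U phi A" using p0AY False by blast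
        fix A' assume A': "min_gen U phi c A' \<and> A' \<subseteq> phi0 U phi A"
        have s1: "phi0 U phi A' \<subseteq> phi0 U phi A" using A' phi0_sub by blast
        have "A' \<subseteq> phi0 U phi A'" unfolding phi0_def by (rule ic_incl)
        then have "A' \<subseteq> Y" using s1 p0AY by blast
        then have "card (phi0 U phi A) \<le> card (phi0 U phi A')" using Amin A' by blast
        moreover have "finite (phi0 U phi A)" using phi0_U[OF AU] fin finite_subset by blast
        ultimately have "phi0 U phi A' = phi0 U phi A" using s1 card_seteq by blast
        then show "A' = A"
          using min_gen_maxels[OF cl st, of c A] min_gen_maxels[OF cl st, of c A'] A A' by metis
      qed
      then have "(A,c) \<in> D_basis U phi" unfolding D_basis_def using cU by blast
      then show ?thesis using wcd_from_basis[OF mf _ _ sU] A by blast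
    qed
  qed
  then show "WCD U (phi0 U phi X) Ss = imp_closure Ss (phi0 U phi X)"
    using wcd_main[OF cl YU sound] unfolding Y_def by blast
qed

end
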